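(* In the setting described in the context, if the operator $-i\,\Sigma^*\circ\Upsilon$ on $K^\partial\oplus K^\partial$ is positive definite, then $P+\varepsilon$ is an isomorphism $\mathcal D(P)\to H_0\oplus H_0$.
   Context: Inner products are linear in the first argument and conjugate-linear in the second. $H_0$ is a separable Hilbert space, $T$ a closed densely defined symmetric operator in $H_0$ with adjoint $T^*$; $H_1\subset H_0$ a dense subspace which is a Hilbert space with bounded inclusion, $H_1\subset\mathcal D(T^* )$. $K^\partial$ is a separable Hilbert space with inner product $\langle\cdot,\cdot\rangle_\partial$, $K\subset K^\partial$ a dense Hilbert subspace, and $\gamma:H_1\to K\oplus K$ a bounded surjective operator with $\mathcal D(T)=\operatorname{Ker}\gamma$. $\Sigma$ is a bounded invertible self-adjoint operator on $K^\partial\oplus K^\partial$ leaving $K\oplus K$ invariant, and $\langle T^*u,v\rangle-\langle u,T^*v\rangle=\langle i\Sigma\gamma u,\gamma v\rangle_\partial$ for all $u,v\in H_1$. $\Upsilon$ is a unitary operator on $K^\partial\oplus K^\partial$ leaving $K\oplus K$ invariant and commuting with $\Sigma$. Let $S=T\oplus(-T)$ in $H_0\oplus H_0$ (domain $\operatorname{Ker}\gamma\oplus\operatorname{Ker}\gamma$), so $S^*=T^*\oplus(-T^* )$. Let $P$ be the restriction of $S^*$ to $\{(a,b)\in H_1\oplus H_1:\gamma b=\Upsilon\gamma a\}$, i.e. $P(a,b)=(T^*a,-T^*b)$ on this domain; assume $P$ is a self-adjoint Fredholm operator in $H_0\oplus H_0$. Let $\varepsilon=\begin{pmatrix}0&1\\1&0\end{pmatrix}$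 on $H_0\oplus H_0$, i.e. $\varepsilon(a,b)=(b,a)$. *)

theory Defs
  imports "HOL-Analysis.Analysis"
begin

text \<open>The library has only real inner product spaces, so we introduce complex Hilbert
spaces as real Banach spaces with a compatible complex scalar multiplication and a
complex inner product, linear in the first and conjugate-linear in the second argument,
inducing the norm.\<close>

class chilbert = banach +
  fixes scaleC :: "complex \<Rightarrow> 'a \<Rightarrow> 'a" (infixr \<open>*\<^sub>C\<close> 75)
    and cinner :: "'a \<Rightarrow> 'a \<Rightarrow> complex"
  assumes scaleC_add_right: "c *\<^sub>C (x + y) = c *\<^sub>C x + c *\<^sub>C y"
    and scaleC_add_left: "(a + b) *\<^sub>C x = a *\<^sub>C x + b *\<^sub>C x"
    and scaleC_scaleC: "a *\<^sub>C (b *\<^sub>C x) = (a * b) *\<^sub>C x"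
    and scaleC_one: "1 *\<^sub>C x = x"
    and scaleR_scaleC: "scaleR r x = complex_of_real r *\<^sub>C x"
    and cinner_add_left: "cinner (x + y) z = cinner x z + cinner y z"
    and cinner_scaleC_left: "cinner (c *\<^sub>C x) y = c * cinner x y"
    and cinner_commute: "cinner y x = cnj (cinner x y)"
    and cinner_self_norm: "cinner x x = complex_of_real ((norm x)\<^sup>2)"

text \<open>Orthogonal direct sum \<open>H \<oplus> H'\<close> is the product type.\<close>

instantiation prod :: (chilbert, chilbert) chilbert
begin

definition scaleC_prod_def:
  "scaleC c x = (scaleC c (fst x), scaleC c (snd x))"

definition cinner_prod_def:
  "cinner x y = cinner (fst x) (fst y) + cinner (snd x) (snd y)"

instance
proof
  fix c a b :: complex and r :: real and x y z :: "'a \<times> 'b"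
  show "c *\<^sub>C (x + y) = c *\<^sub>C x + c *\<^sub>C y"
    by (simp add: scaleC_prod_def scaleC_add_right)
  show "(a + b) *\<^sub>C x = a *\<^sub>C x + b *\<^sub>C x"
    by (simp add: scaleC_prod_def scaleC_add_left)
  show "a *\<^sub>C (b *\<^sub>C x) = (a * b) *\<^sub>C x"
    by (simp add: scaleC_prod_def scaleC_scaleC)
  show "1 *\<^sub>C x = x"
    by (simp add: scaleC_prod_def scaleC_one)
  show "scaleR r x = complex_of_real r *\<^sub>C x"
    by (simp add: scaleC_prod_def scaleR_prod_def scaleR_scaleC)
  show "cinner (x + y) z = cinner x z + cinner y z"
    by (simp add: cinner_prod_def cinner_add_left)
  show "cinner (c *\<^sub>C x) y = c * cinner x y"
    by (simp add: cinner_prod_def scaleC_prod_def cinner_scaleC_left algebra_simps)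
  show "cinner y x = cnj (cinner x y)"
    by (simp add: cinner_prod_def cinner_commute[of "fst y"] cinner_commute[of "snd y"])
  show "cinner x x = complex_of_real ((norm x)\<^sup>2)"
    by (cases x) (simp add: cinner_prod_def cinner_self_norm norm_Pair)
qed

end

definition clinear :: "('a::chilbert \<Rightarrow> 'b::chilbert) \<Rightarrow> bool" where
  "clinear f \<longleftrightarrow> (\<forall>x y. f (x + y) = f x + f y) \<and> (\<forall>c x. f (c *\<^sub>C x) = c *\<^sub>C f x)"

definition bounded_clinear :: "('a::chilbert \<Rightarrow> 'b::chilbert) \<Rightarrow> bool" where
  "bounded_clinear f \<longleftrightarrow> clinear f \<and> (\<exists>C. \<forall>x. norm (f x) \<le> C * norm x)"

definition csubspace :: "'a::chilbert set \<Rightarrow> bool" where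
  "csubspace D \<longleftrightarrow> 0 \<in> D \<and> (\<forall>x\<in>D. \<forall>y\<in>D. x + y \<in> D) \<and> (\<forall>c. \<forall>x\<in>D. c *\<^sub>C x \<in> D)"

text \<open>An operator in \<open>H\<close> is given by its domain \<open>D\<close> and its action \<open>A\<close> on \<open>D\<close>.\<close>

definition linear_op :: "'a::chilbert set \<Rightarrow> ('a \<Rightarrow> 'a) \<Rightarrow> bool" where
  "linear_op D A \<longleftrightarrow> csubspace D \<and>
     (\<forall>x\<in>D. \<forall>y\<in>D. A (x + y) = A x + A y) \<and> (\<forall>c. \<forall>x\<in>D. A (c *\<^sub>C x) = c *\<^sub>C A x)"

definition densely_defined :: "'a::chilbert set \<Rightarrow> ('a \<Rightarrow> 'a) \<Rightarrow> bool" where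
  "densely_defined D A \<longleftrightarrow> linear_op D A \<and> closure D = UNIV"

definition closed_op :: "'a::chilbert set \<Rightarrow> ('a \<Rightarrow> 'a) \<Rightarrow> bool" where
  "closed_op D A \<longleftrightarrow> closed {(x, A x) | x. x \<in> D}"

definition symmetric_op :: "'a::chilbert set \<Rightarrow> ('a \<Rightarrow> 'a) \<Rightarrow> bool" where
  "symmetric_op D A \<longleftrightarrow> densely_defined D A \<and>
     (\<forall>u\<in>D. \<forall>v\<in>D. cinner (A u) v = cinner u (A v))"

text \<open>Domain of the adjoint and the adjoint itself (well defined for densely defined \<open>A\<close>).\<close>

definition adj_dom :: "'a::chilbert set \<Rightarrow> ('a \<Rightarrow> 'a) \<Rightarrow> 'a set" where
  "adj_dom D A = {v. \<exists>w. \<forall>u\<in>D. cinner (A u) v = cinner u w}"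

definition adj :: "'a::chilbert set \<Rightarrow> ('a \<Rightarrow> 'a) \<Rightarrow> 'a \<Rightarrow> 'a" where
  "adj D A v = (SOME w. \<forall>u\<in>D. cinner (A u) v = cinner u w)"

definition self_adjoint_op :: "'a::chilbert set \<Rightarrow> ('a \<Rightarrow> 'a) \<Rightarrow> bool" where
  "self_adjoint_op D A \<longleftrightarrow> densely_defined D A \<and> adj_dom D A = D \<and> (\<forall>v\<in>D. adj D A v = A v)"

definition fin_dim :: "'a::chilbert set \<Rightarrow> bool" where
  "fin_dim V \<longleftrightarrow> (\<exists>F. finite F \<and> (\<forall>v\<in>V. \<exists>c. v = (\<Sum>x\<in>F. c x *\<^sub>C x)))"

definition fin_codim :: "'a::chilbert set \<Rightarrow> bool" where
  "fin_codim V \<longleftrightarrow> (\<exists>F. finite F \<and> (\<forall>y. \<exists>z\<in>V. \<exists>c. y = z + (\<Sum>x\<in>F. c x *\<^sub>C x)))"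

definition fredholm_op :: "'a::chilbert set \<Rightarrow> ('a \<Rightarrow> 'a) \<Rightarrow> bool" where
  "fredholm_op D A \<longleftrightarrow> linear_op D A \<and> closed_op D A \<and> closed (A ` D) \<and>
     fin_dim {x\<in>D. A x = 0} \<and> fin_codim (A ` D)"

definition self_adjoint_bdd :: "('a::chilbert \<Rightarrow> 'a) \<Rightarrow> bool" where
  "self_adjoint_bdd S \<longleftrightarrow> bounded_clinear S \<and> (\<forall>x y. cinner (S x) y = cinner x (S y))"

definition invertible_bdd :: "('a::chilbert \<Rightarrow> 'a) \<Rightarrow> bool" where
  "invertible_bdd S \<longleftrightarrow> bounded_clinear S \<and>
     (\<exists>S'. bounded_clinear S' \<and> S \<circ> S' = id \<and> S' \<circ> S = id)"

definition unitary_bdd :: "('a::chilbert \<Rightarrow> 'a) \<Rightarrow> bool" where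
  "unitary_bdd U \<longleftrightarrow> bounded_clinear U \<and> surj U \<and> (\<forall>x y. cinner (U x) (U y) = cinner x y)"

definition positive_definite :: "('a::chilbert \<Rightarrow> 'a) \<Rightarrow> bool" where
  "positive_definite A \<longleftrightarrow> bounded_clinear A \<and>
     (\<forall>x. x \<noteq> 0 \<longrightarrow> Im (cinner (A x) x) = 0 \<and> Re (cinner (A x) x) > 0)"

end

theory Submission
  imports Defs
begin


lemma cinner_zero_left[simp]: "cinner (0::'a::chilbert) y = 0"
  using cinner_add_left[of 0 0 y] by simp
lemma cinner_minus_left: "cinner (- x) y = - cinner x y"
  using cinner_add_left[of x "-x" y] by (simp add: add_eq_0_iff)
lemma cinner_diff_left: "cinner (x - y) z = cinner x z - cinner y z"
  using cinner_add_left[of x "-y" z] cinner_minus_left[of y z] by simp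
lemma cinner_add_right: "cinner x (y + z) = cinner x y + cinner x z"
  by (metis cinner_add_left cinner_commute complex_cnj_add)
lemma cinner_zero_right[simp]: "cinner x 0 = 0"
  by (metis cinner_commute cinner_zero_left complex_cnj_zero)
lemma cinner_minus_right: "cinner x (- y) = - cinner x y"
  by (metis cinner_commute cinner_minus_left complex_cnj_minus)
lemma cinner_diff_right: "cinner x (y - z) = cinner x y - cinner x z"
  by (metis cinner_commute cinner_diff_left complex_cnj_diff)
lemma cinner_scaleC_right: "cinner x (c *\<^sub>C y) = cnj c * cinner x y"
  by (metis cinner_commute cinner_scaleC_left complex_cnj_mult)
lemma cinner_scaleR_left: "cinner (scaleR r x) y = of_real r * cinner x y"
  by (simp add: scaleR_scaleC cinner_scaleC_left)
lemma norm_sq_cinner: "(norm x)^2 = Re (cinner x x)"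
  by (simp add: cinner_self_norm)
lemma Re_cinner_sym: "Re (cinner x y) = Re (cinner y x)"
  by (subst cinner_commute) simp
lemma norm_add_sq: "(norm (x + y))^2 = (norm x)^2 + (norm y)^2 + 2 * Re (cinner x y)"
  unfolding norm_sq_cinner cinner_add_left cinner_add_right
  using Re_cinner_sym[of y x] by simp
lemma norm_diff_sq: "(norm (x - y))^2 = (norm x)^2 + (norm y)^2 - 2 * Re (cinner x y)"
  unfolding norm_sq_cinner cinner_diff_left cinner_diff_right
  using Re_cinner_sym[of y x] by simp
lemma scaleC_minus1: "(-1) *\<^sub>C x = - x"
proof -
  have "(-1) *\<^sub>C x = scaleR (-1) x" by (simp add: scaleR_scaleC)
  then show ?thesis by simp
qed

lemma norm_scaleC_sq: "(norm (c *\<^sub>C (x::'a::chilbert)))^2 = (cmod c)^2 * (norm x)^2"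
proof -
  have "(norm (c *\<^sub>C x))^2 = Re (cnj c * (c * cinner x x))"
    unfolding norm_sq_cinner cinner_scaleC_left cinner_scaleC_right by (rule refl)
  also have "cnj c * (c * cinner x x) = of_real ((cmod c)^2) * of_real ((norm x)^2)"
  proof -
    have "cnj c * (c * cinner x x) = (c * cnj c) * cinner x x" by (simp only: mult.assoc[symmetric] mult.commute[of "cnj c" c])
    moreover have "c * cnj c = of_real ((cmod c)^2)" by (rule complex_norm_square[symmetric])
    ultimately show ?thesis by (simp only: cinner_self_norm)
  qed
  finally show ?thesis by (simp only: of_real_mult[symmetric] Re_complex_of_real)
qed

lemma projection:
  fixes R :: "'a::chilbert set" and y :: 'a
  assumes cl: "closed R" and R0: "0 \<in> R" and Radd: "\<forall>x\<in>R. \<forall>z\<in>R. x + z \<in> R"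
    and Rsc: "\<forall>c. \<forall>x\<in>R. c *\<^sub>C x \<in> R"
  shows "\<exists>p\<in>R. \<forall>r\<in>R. cinner (y - p) r = 0"
proof -
  define d where "d = Inf ((\<lambda>r. norm (y - r)) ` R)"
  have bdd: "bdd_below ((\<lambda>r. norm (y - r)) ` R)"
    by (rule bdd_belowI[of _ 0]) auto
  have low: "d \<le> norm (y - q)" if "q \<in> R" for q
    unfolding d_def using bdd that by (intro cInf_lower) auto
  have d0: "0 \<le> d" unfolding d_def using R0 by (intro cInf_greatest) auto
  have Rneg: "- x \<in> R" if "x \<in> R" for x
    using Rsc that scaleC_minus1[of x] by metis
  have RscR: "scaleR a x \<in> R" if "x \<in> R" for x a
    using Rsc that by (simp add: scaleR_scaleC)
  define b where "b n = d^2 + inverse (real (Suc n))" for n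
  have "\<exists>r\<in>R. (norm (y - r))^2 < b n" for n
  proof -
    have "d < sqrt (b n)"
      using d0 by (simp add: b_def real_less_rsqrt)
    then obtain r where r: "r \<in> R" "norm (y - r) < sqrt (b n)"
      unfolding d_def using R0 by (subst (asm) cInf_less_iff) (auto simp: bdd)
    have "(norm (y - r))^2 < (sqrt (b n))^2"
      using r(2) by (intro power_strict_mono) auto
    also have "\<dots> = b n" using d0 by (simp add: b_def)
    finally show ?thesis using r(1) by blast
  qed
  then obtain r where rR: "\<And>n. r n \<in> R" and rb: "\<And>n. (norm (y - r n))^2 < b n"
    by metis
  have par: "(norm (r m - r n))^2 \<le> 2 * inverse (real (Suc m)) + 2 * inverse (real (Suc n))" for m n
  proof -
    define a1 where "a1 = y - r n"
    define a2 where "a2 = y - r m"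
    define mid where "mid = scaleR (1/2) (r n + r m)"
    have midR: "mid \<in> R" unfolding mid_def using RscR Radd rR by blast
    have "a1 + a2 = scaleR 2 (y - mid)"
      unfolding a1_def a2_def mid_def by (simp add: algebra_simps scaleR_add_right scaleR_2)
    hence "norm (a1 + a2) = 2 * norm (y - mid)" by simp
    hence "2 * d \<le> norm (a1 + a2)" using low[OF midR] by simp
    hence h1: "4 * d^2 \<le> (norm (a1 + a2))^2"
      using d0 by (metis power2_eq_square power_mono mult_nonneg_nonneg zero_le_numeral
          power_mult_distrib numeral_Bit0 numeral_One one_power2 mult_2 power2_sum)
    have h2: "(norm (a1 - a2))^2 + (norm (a1 + a2))^2 = 2 * (norm a1)^2 + 2 * (norm a2)^2"
      using norm_add_sq[of a1 a2] norm_diff_sq[of a1 a2] by simp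
    have "a1 - a2 = r m - r n" unfolding a1_def a2_def by simp
    with h1 h2 rb[of n] rb[of m] show ?thesis
      unfolding a1_def[symmetric] a2_def[symmetric] b_def by simp
  qed
  have "Cauchy r"
  proof (rule metric_CauchyI)
    fix e :: real assume e: "0 < e"
    obtain N :: nat where N: "4 / e^2 < real N" using reals_Archimedean2 by blast
    have "\<forall>m\<ge>N. \<forall>n\<ge>N. dist (r m) (r n) < e"
    proof (intro allI impI)
      fix m n assume mn: "N \<le> m" "N \<le> n"
      have iN: "inverse (real (Suc k)) \<le> inverse (real (Suc N))" if "N \<le> k" for k
        using that by (simp add: le_imp_inverse_le)
      have "4 / e^2 < real (Suc N)" using N by simp
      hence "4 * inverse (real (Suc N)) < e^2"
        using e by (simp add: field_simps)
      moreover have "(dist (r m) (r n))^2 = (norm (r m - r n))^2" by (simp add: dist_norm)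
      moreover note par[of m n] iN[OF mn(1)] iN[OF mn(2)]
      ultimately have "(dist (r m) (r n))^2 < e^2" by linarith
      thus "dist (r m) (r n) < e" using e by (simp add: power_less_imp_less_base)
    qed
    thus "\<exists>M. \<forall>m\<ge>M. \<forall>n\<ge>M. dist (r m) (r n) < e" by blast
  qed
  then obtain p where lim: "r \<longlonglongrightarrow> p"
    using Cauchy_convergent convergent_def by blast
  have pR: "p \<in> R" using closed_sequentially[OF cl] rR lim by blast
  have "(\<lambda>n. (norm (y - r n))^2) \<longlonglongrightarrow> (norm (y - p))^2"
    by (intro tendsto_intros lim)
  moreover have "b \<longlonglongrightarrow> d^2 + 0"
    unfolding b_def by (intro tendsto_intros LIMSEQ_inverse_real_of_nat)
  ultimately have "(norm (y - p))^2 \<le> d^2 + 0"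
    using rb by (intro LIMSEQ_le) (auto intro: less_imp_le)
  hence "(norm (y - p))^2 \<le> d^2" by simp
  hence wd: "norm (y - p) \<le> d" using d0 by (rule power2_le_imp_le)
  have "cinner (y - p) q = 0" if qR: "q \<in> R" for q
  proof (rule ccontr)
    define w where "w = y - p"
    define c where "c = cinner w q"
    assume "cinner (y - p) q \<noteq> 0"
    hence c0: "c \<noteq> 0" by (simp add: c_def w_def)
    define s where "s = 1 / ((norm q)^2 + 1)"
    have "0 < (norm q)^2 + 1" by (rule add_nonneg_pos) simp_all
    hence s0: "0 < s" unfolding s_def by simp
    have s1: "s * (norm q)^2 < 1" using \<open>0 < (norm q)^2 + 1\<close> by (simp add: s_def field_simps)
    define t where "t = complex_of_real s * c"
    have "p + t *\<^sub>C q \<in> R" using Radd Rsc pR qR by blast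
    hence "d \<le> norm (w - t *\<^sub>C q)" using low[of "p + t *\<^sub>C q"]
      by (simp add: w_def algebra_simps)
    hence "norm w \<le> norm (w - t *\<^sub>C q)" using wd w_def by simp
    hence "(norm w)^2 \<le> (norm (w - t *\<^sub>C q))^2" by (simp add: power_mono)
    also have "\<dots> = (norm w)^2 + (cmod t)^2 * (norm q)^2 - 2 * Re (cinner w (t *\<^sub>C q))"
      by (simp add: norm_diff_sq norm_scaleC_sq)
    also have "cinner w (t *\<^sub>C q) = complex_of_real (s * (cmod c)^2)"
    proof -
      have "cinner w (t *\<^sub>C q) = of_real s * (c * cnj c)"
        by (simp add: cinner_scaleC_right t_def c_def[symmetric] mult.commute mult.left_commute)
      also have "c * cnj c = of_real ((cmod c)^2)" by (rule complex_norm_square[symmetric])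
      finally show ?thesis by (simp only: of_real_mult)
    qed
    also have "(cmod t)^2 = s^2 * (cmod c)^2"
      using s0 by (simp add: t_def norm_mult power_mult_distrib)
    finally have "0 \<le> s * (cmod c)^2 * (s * (norm q)^2 - 2)"
      by (simp add: algebra_simps power2_eq_square)
    moreover have "0 < s * (cmod c)^2" using s0 c0 by simp
    ultimately have "0 \<le> s * (norm q)^2 - 2"
      by (simp add: zero_le_mult_iff)
    with s1 show False by simp
  qed
  with pR show ?thesis by blast
qed
lemma lop_facts:
  assumes "linear_op D (A :: 'a::chilbert \<Rightarrow> 'a)"
  shows "0 \<in> D" "\<And>x y. x \<in> D \<Longrightarrow> y \<in> D \<Longrightarrow> x + y \<in> D"
    "\<And>c x. x \<in> D \<Longrightarrow> c *\<^sub>C x \<in> D"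
    "\<And>x y. x \<in> D \<Longrightarrow> y \<in> D \<Longrightarrow> x - y \<in> D"
    "\<And>x y. x \<in> D \<Longrightarrow> y \<in> D \<Longrightarrow> A (x + y) = A x + A y"
    "\<And>c x. x \<in> D \<Longrightarrow> A (c *\<^sub>C x) = c *\<^sub>C A x"
    "\<And>x y. x \<in> D \<Longrightarrow> y \<in> D \<Longrightarrow> A (x - y) = A x - A y"
    "A 0 = 0"
proof -
  have cs: "csubspace D" and ad: "\<forall>x\<in>D. \<forall>y\<in>D. A (x + y) = A x + A y"
    and sc: "\<forall>c. \<forall>x\<in>D. A (c *\<^sub>C x) = c *\<^sub>C A x"
    using assms unfolding linear_op_def by auto
  show z: "0 \<in> D" using cs unfolding csubspace_def by auto
  show a: "\<And>x y. x \<in> D \<Longrightarrow> y \<in> D \<Longrightarrow> x + y \<in> D" using cs unfolding csubspace_def by auto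
  show s: "\<And>c x. x \<in> D \<Longrightarrow> c *\<^sub>C x \<in> D" using cs unfolding csubspace_def by auto
  have m: "x - y = x + (-1) *\<^sub>C y" for x y :: 'a by (simp add: scaleC_minus1)
  show "\<And>x y. x \<in> D \<Longrightarrow> y \<in> D \<Longrightarrow> x - y \<in> D" using a s m by metis
  show "\<And>x y. x \<in> D \<Longrightarrow> y \<in> D \<Longrightarrow> A (x + y) = A x + A y" using ad by auto
  show "\<And>c x. x \<in> D \<Longrightarrow> A (c *\<^sub>C x) = c *\<^sub>C A x" using sc by auto
  show "\<And>x y. x \<in> D \<Longrightarrow> y \<in> D \<Longrightarrow> A (x - y) = A x - A y"
  proof -
    fix x y assume xy: "x \<in> D" "y \<in> D"
    have "A (x - y) = A x + A ((-1) *\<^sub>C y)" using m ad s xy by metis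
    also have "A ((-1) *\<^sub>C y) = (-1) *\<^sub>C A y" using sc xy by blast
    also have "A x + (-1) *\<^sub>C A y = A x - A y" by (simp add: scaleC_minus1)
    finally show "A (x - y) = A x - A y" .
  qed
  show "A 0 = 0" using ad z by (metis add_cancel_right_right add_0)
qed

lemma orth_dense:
  fixes v :: "'a::chilbert"
  assumes "closure D = UNIV" "\<forall>u\<in>D. cinner u v = 0"
  shows "v = 0"
proof (rule ccontr)
  assume v0: "v \<noteq> 0"
  have "v \<in> closure D" using assms(1) by simp
  then obtain u where u: "u \<in> D" "dist u v < norm v"
    using v0 by (metis closure_approachable zero_less_norm_iff)
  have "(norm (u - v))^2 = (norm u)^2 + (norm v)^2" using norm_diff_sq[of u v] assms(2) u(1) by simp
  hence "norm v \<le> norm (u - v)" by (metis le_add_same_cancel2 zero_le_power2 power2_le_imp_le norm_ge_zero)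
  with u(2) show False by (simp add: dist_norm)
qed

lemma Cauchy_dom:
  fixes a :: "nat \<Rightarrow> 'a::metric_space" and f :: "nat \<Rightarrow> 'b::metric_space"
  assumes "Cauchy f" "\<And>m n. dist (a m) (a n) \<le> dist (f m) (f n)"
  shows "Cauchy a"
proof (rule metric_CauchyI)
  fix e :: real assume "0 < e"
  then obtain M where "\<forall>m\<ge>M. \<forall>n\<ge>M. dist (f m) (f n) < e" using assms(1) metric_CauchyD by blast
  thus "\<exists>M. \<forall>m\<ge>M. \<forall>n\<ge>M. dist (a m) (a n) < e" using assms(2) by (meson le_less_trans)
qed

theorem theorem8p2:
  fixes DT :: "'h::{chilbert, second_countable_topology} set"
    and T :: "'h \<Rightarrow> 'h"
    and incl1 :: "'h1::{chilbert, second_countable_topology} \<Rightarrow> 'h"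
    and inclK :: "'k::{chilbert, second_countable_topology} \<Rightarrow> 'd::{chilbert, second_countable_topology}"
    and \<gamma> :: "'h1 \<Rightarrow> 'k \<times> 'k"
    and \<Sigma> :: "'d \<times> 'd \<Rightarrow> 'd \<times> 'd"
    and \<Upsilon> :: "'d \<times> 'd \<Rightarrow> 'd \<times> 'd"
  defines "jj \<equiv> map_prod inclK inclK"
  defines "Tst \<equiv> adj DT T"
  defines "DP \<equiv> {(incl1 a, incl1 b) | a b. jj (\<gamma> b) = \<Upsilon> (jj (\<gamma> a))}"
  defines "P \<equiv> (\<lambda>(x, y). (Tst x, - Tst y))"
  defines "\<epsilon> \<equiv> (\<lambda>(x::'h, y::'h). (y, x))"
  assumes T_closed: "closed_op DT T"
    and T_symm: "symmetric_op DT T"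
    and H1_incl: "bounded_clinear incl1" "inj incl1" "closure (range incl1) = UNIV"
    and H1_sub: "range incl1 \<subseteq> adj_dom DT T"
    and K_incl: "bounded_clinear inclK" "inj inclK" "closure (range inclK) = UNIV"
    and \<gamma>_bdd: "bounded_clinear \<gamma>" and \<gamma>_surj: "surj \<gamma>"
    and DT_ker: "DT = incl1 ` {u. \<gamma> u = 0}"
    and \<Sigma>_inv: "invertible_bdd \<Sigma>" and \<Sigma>_sa: "self_adjoint_bdd \<Sigma>"
    and \<Sigma>_KK: "\<Sigma> ` range jj \<subseteq> range jj"
    and Green: "\<forall>u v. cinner (Tst (incl1 u)) (incl1 v) - cinner (incl1 u) (Tst (incl1 v))
                   = cinner (\<i> *\<^sub>C \<Sigma> (jj (\<gamma> u))) (jj (\<gamma> v))"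
    and \<Upsilon>_unitary: "unitary_bdd \<Upsilon>" and \<Upsilon>_KK: "\<Upsilon> ` range jj \<subseteq> range jj"
    and \<Upsilon>_comm: "\<Sigma> \<circ> \<Upsilon> = \<Upsilon> \<circ> \<Sigma>"
    and P_sa: "self_adjoint_op DP P" and P_fred: "fredholm_op DP P"
    and pos: "positive_definite (\<lambda>x. (- \<i>) *\<^sub>C \<Sigma> (\<Upsilon> x))"
  shows "bij_betw (\<lambda>x. P x + \<epsilon> x) DP UNIV \<and>
         (\<exists>C. \<forall>x\<in>DP. norm x + norm (P x) \<le> C * norm (P x + \<epsilon> x))"
proof -
  define Q where "Q = (\<lambda>x. P x + \<epsilon> x)"
  have lin: "linear_op DP P" and dens: "closure DP = UNIV"
    using P_sa unfolding self_adjoint_op_def densely_defined_def by auto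
  note L = lop_facts[OF lin]
  have clop: "closed_op DP P" using P_fred unfolding fredholm_op_def by auto
  have eps: "\<epsilon> x = (snd x, fst x)" for x unfolding \<epsilon>_def by (cases x) simp
  have eps_add: "\<epsilon> (x + y) = \<epsilon> x + \<epsilon> y" for x y by (simp add: eps)
  have eps_sc: "\<epsilon> (c *\<^sub>C x) = c *\<^sub>C \<epsilon> x" for c x by (simp add: eps scaleC_prod_def)
  have eps_diff: "\<epsilon> (x - y) = \<epsilon> x - \<epsilon> y" for x y by (simp add: eps)
  have eps_norm: "norm (\<epsilon> x) = norm x" for x by (cases x) (simp add: eps norm_Pair add.commute)
  have eps_inner: "cinner (\<epsilon> x) w = cinner x (\<epsilon> w)" for x w
    by (simp add: eps cinner_prod_def add.commute)
  have Q_diff: "Q (x - y) = Q x - Q y" if "x \<in> DP" "y \<in> DP" for x y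
    using L(7)[OF that] by (simp add: Q_def eps_diff)
  have est: "(norm (P x))^2 + (norm x)^2 \<le> (norm (Q x))^2" if xD: "x \<in> DP" for x
  proof -
    obtain a b where x: "x = (incl1 a, incl1 b)" and bc: "jj (\<gamma> b) = \<Upsilon> (jj (\<gamma> a))"
      using xD unfolding DP_def by blast
    define A where "A = incl1 a"
    define B where "B = incl1 b"
    define g where "g = jj (\<gamma> a)"
    define X where "X = cinner (\<Sigma> (\<Upsilon> g)) g"
    have Px: "P x = (Tst A, - Tst B)" by (simp add: P_def x A_def B_def)
    have ex: "\<epsilon> x = (B, A)" by (simp add: eps x A_def B_def)
    have ci: "cinner (P x) (\<epsilon> x) = cinner (Tst A) B - cinner (Tst B) A"
      by (simp add: Px ex cinner_prod_def cinner_minus_left)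
    have gr: "cinner (Tst B) A - cinner B (Tst A) = \<i> * X"
      using Green[rule_format, of b a] bc
      by (simp add: A_def B_def g_def X_def cinner_scaleC_left)
    have posg: "0 \<le> Re ((- \<i>) * X)"
    proof (cases "g = 0")
      case True
      then show ?thesis by (simp add: X_def)
    next
      case False
      hence "0 < Re (cinner ((- \<i>) *\<^sub>C \<Sigma> (\<Upsilon> g)) g)"
        using pos unfolding positive_definite_def by blast
      thus ?thesis unfolding X_def cinner_scaleC_left by simp
    qed
    have "Re (cinner (P x) (\<epsilon> x)) = Re (cinner B (Tst A)) - Re (cinner (Tst B) A)"
      using ci Re_cinner_sym[of "Tst A" B] by simp
    also have "\<dots> = - Re (\<i> * X)" using arg_cong[where f=Re, OF gr] by simp
    also have "\<dots> = Re ((- \<i>) * X)" by simp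
    finally have "0 \<le> Re (cinner (P x) (\<epsilon> x))" using posg by simp
    thus ?thesis using norm_add_sq[of "P x" "\<epsilon> x"] eps_norm[of x] by (simp add: Q_def)
  qed
  have estQ: "norm x \<le> norm (Q x)" "norm (P x) \<le> norm (Q x)" if "x \<in> DP" for x
  proof -
    have e1: "(norm x)^2 \<le> (norm (Q x))^2" using est[OF that] zero_le_power2[of "norm (P x)"] by linarith
    have e2: "(norm (P x))^2 \<le> (norm (Q x))^2" using est[OF that] zero_le_power2[of "norm x"] by linarith
    show "norm x \<le> norm (Q x)" by (rule power2_le_imp_le[OF e1 norm_ge_zero])
    show "norm (P x) \<le> norm (Q x)" by (rule power2_le_imp_le[OF e2 norm_ge_zero])
  qed
  have inj: "inj_on Q DP"
  proof (rule inj_onI)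
    fix x y assume xy: "x \<in> DP" "y \<in> DP" "Q x = Q y"
    have "norm (x - y) \<le> norm (Q (x - y))" using estQ(1) L(4)[OF xy(1,2)] by blast
    also have "\<dots> = 0" using Q_diff[OF xy(1,2)] xy(3) by simp
    finally show "x = y" by simp
  qed
  define R where "R = Q ` DP"
  have R0: "0 \<in> R"
  proof -
    have "Q 0 = 0" using L(8) by (simp add: Q_def eps zero_prod_def)
    thus ?thesis using L(1) unfolding R_def by (metis image_eqI)
  qed
  have Radd: "\<forall>x\<in>R. \<forall>z\<in>R. x + z \<in> R"
  proof (intro ballI)
    fix x z assume "x \<in> R" "z \<in> R"
    then obtain u v where uv: "u \<in> DP" "v \<in> DP" "x = Q u" "z = Q v" unfolding R_def by blast
    have "Q (u + v) = x + z" using L(5)[OF uv(1,2)] uv(3,4) by (simp add: Q_def eps_add algebra_simps)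
    thus "x + z \<in> R" using L(2)[OF uv(1,2)] unfolding R_def by (metis image_eqI)
  qed
  have Rsc: "\<forall>c. \<forall>x\<in>R. c *\<^sub>C x \<in> R"
  proof (intro allI ballI)
    fix c x assume "x \<in> R"
    then obtain u where u: "u \<in> DP" "x = Q u" unfolding R_def by blast
    have "Q (c *\<^sub>C u) = c *\<^sub>C x" using L(6)[OF u(1)] u(2)
      by (simp add: Q_def eps_sc scaleC_add_right)
    thus "c *\<^sub>C x \<in> R" using L(3)[OF u(1)] unfolding R_def by (metis image_eqI)
  qed
  have Rcl: "closed R"
    unfolding closed_sequential_limits
  proof (intro allI impI, elim conjE)
    fix f l assume fR: "\<forall>n. f n \<in> R" and fl: "f \<longlonglongrightarrow> l"
    have "\<forall>n. \<exists>u. u \<in> DP \<and> f n = Q u" using fR unfolding R_def by blast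
    then obtain x where "\<forall>n. x n \<in> DP \<and> f n = Q (x n)" by metis
    hence xD: "\<And>n. x n \<in> DP" and fx: "\<And>n. f n = Q (x n)" by auto
    have cf: "Cauchy f" using fl by (rule LIMSEQ_imp_Cauchy)
    have dd: "dist (x m) (x n) \<le> dist (f m) (f n)" "dist (P (x m)) (P (x n)) \<le> dist (f m) (f n)" for m n
    proof -
      have "dist (f m) (f n) = norm (Q (x m - x n))" by (simp add: fx dist_norm Q_diff xD)
      moreover have "dist (x m) (x n) = norm (x m - x n)" by (simp add: dist_norm)
      moreover have "dist (P (x m)) (P (x n)) = norm (P (x m - x n))" by (simp add: dist_norm L(7) xD)
      ultimately show "dist (x m) (x n) \<le> dist (f m) (f n)" "dist (P (x m)) (P (x n)) \<le> dist (f m) (f n)"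
        using estQ[OF L(4)[OF xD xD]] by auto
    qed
    have "Cauchy x" using Cauchy_dom[OF cf dd(1)] .
    then obtain u where xu: "x \<longlonglongrightarrow> u" using Cauchy_convergent convergent_def by blast
    have "Cauchy (\<lambda>n. P (x n))" using Cauchy_dom[OF cf dd(2)] .
    then obtain z where Pz: "(\<lambda>n. P (x n)) \<longlonglongrightarrow> z" using Cauchy_convergent convergent_def by blast
    have tl: "(\<lambda>n. (x n, P (x n))) \<longlonglongrightarrow> (u, z)" using xu Pz by (rule tendsto_Pair)
    have inG: "\<And>n. (x n, P (x n)) \<in> {(x, P x) | x. x \<in> DP}" using xD by blast
    have "(u, z) \<in> {(x, P x) | x. x \<in> DP}"
      by (rule closed_sequentially[OF clop[unfolded closed_op_def] inG tl])
    hence uD: "u \<in> DP" and zu: "z = P u" by auto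
    have "(\<lambda>n. \<epsilon> (x n)) \<longlonglongrightarrow> \<epsilon> u"
      unfolding eps by (intro tendsto_Pair tendsto_fst tendsto_snd xu)
    hence "(\<lambda>n. P (x n) + \<epsilon> (x n)) \<longlonglongrightarrow> z + \<epsilon> u" using Pz by (intro tendsto_add)
    moreover have "f = (\<lambda>n. Q (x n))" using fx by auto
    ultimately have "f \<longlonglongrightarrow> Q u" using zu by (simp add: Q_def)
    hence "l = Q u" using fl LIMSEQ_unique by blast
    thus "l \<in> R" using uD unfolding R_def by blast
  qed
  have surj: "Q ` DP = UNIV"
  proof (intro set_eqI iffI)
    fix y :: "'h \<times> 'h"
    show "y \<in> UNIV" by simp
    obtain p where pR: "p \<in> R" and orth: "\<forall>r\<in>R. cinner (y - p) r = 0"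
      using projection[OF Rcl R0 Radd Rsc] by blast
    define w where "w = y - p"
    have o2: "cinner (Q x) w = 0" if "x \<in> DP" for x
    proof -
      have "cinner w (Q x) = 0" using orth that unfolding R_def w_def by blast
      thus ?thesis by (metis cinner_commute complex_cnj_zero)
    qed
    have adjw: "cinner (P x) w = cinner x (- \<epsilon> w)" if "x \<in> DP" for x
      using o2[OF that] by (simp add: Q_def cinner_add_left eps_inner cinner_minus_right eq_neg_iff_add_eq_0)
    hence "w \<in> adj_dom DP P" unfolding adj_dom_def by blast
    hence wD: "w \<in> DP" using P_sa unfolding self_adjoint_op_def by blast
    have adjP: "adj DP P w = P w" using P_sa wD unfolding self_adjoint_op_def by blast
    have "\<exists>w'. \<forall>u\<in>DP. cinner (P u) w = cinner u w'" using adjw by blast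
    hence "\<forall>u\<in>DP. cinner (P u) w = cinner u (adj DP P w)"
      unfolding adj_def by (rule someI_ex)
    hence sp: "\<forall>u\<in>DP. cinner (P u) w = cinner u (P w)" by (simp add: adjP)
    have "\<forall>u\<in>DP. cinner u (Q w) = 0"
    proof
      fix u assume uD: "u \<in> DP"
      have "cinner u (P w) = - cinner u (\<epsilon> w)"
        using sp uD adjw[OF uD] by (simp add: cinner_minus_right)
      thus "cinner u (Q w) = 0" by (simp add: Q_def cinner_add_right)
    qed
    hence "Q w = 0" using orth_dense[OF dens] by blast
    hence "w = 0" using estQ(1)[OF wD] by simp
    hence "y = p" by (simp add: w_def)
    thus "y \<in> Q ` DP" using pR unfolding R_def by simp
  qed
  have "bij_betw Q DP UNIV" using inj surj by (simp add: bij_betw_def)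
  moreover have "\<forall>x\<in>DP. norm x + norm (P x) \<le> 2 * norm (Q x)"
    using estQ by fastforce
  ultimately show ?thesis unfolding Q_def by blast
qed

end
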